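(* Let $\ell,\hat\ell:\mathbb{R}^q\times\mathbb{R}^q\to(0,1)$ with $\hat\ell$ continuous and $\hat\ell(x,\xi)\ge\ell(x,\xi)$ for all $x,\xi$. Let $s\in\mathbb{R}^q$, let $c_1,\dots,c_M\in\mathbb{R}^q$, and let $(\xi_k)_{k\in\mathbb{N}}$ be $n$-periodic ($\xi_{k+n}=\xi_k$ for all $k$). For $a,b:\mathbb{R}^q\times\mathbb{R}^q\to(0,1)$ and $x\in\mathbb{R}^q$ define $$K(s,a\,\|\,x,b;\xi_{1:n})=\sum_{k=1}^n\Big[a(s,\xi_k)\ln\frac{a(s,\xi_k)}{b(x,\xi_k)}+(1-a(s,\xi_k))\ln\frac{1-a(s,\xi_k)}{1-b(x,\xi_k)}\Big],$$ and let $$B_{\mathrm{true}}=\operatorname*{argmin}_{i\in\{1,\dots,M\}}K(s,\ell\,\|\,c_i,\hat\ell;\xi_{1:n}),\qquad B_{\mathrm{env}}=\operatorname*{argmin}_{i\in\{1,\dots,M\}}K(s,\hat\ell\,\|\,c_i,\hat\ell;\xi_{1:n}).$$ Suppose that for every $i\in\{1,\dots,M\}$ there exists $j\in B_{\mathrm{true}}$ such that $\hat\ell(c_j,\xi_k)\ge\hat\ell(c_i,\xi_k)$ for all $k\in\{1,\dots,n\}$. Then $B_{\mathrm{env}}\subset B_{\mathrm{true}}$.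
   Context: $\ell$ is the true detection-probability function and $\hat\ell$ an envelope used by the estimator in its place. The paper denotes $B_{\mathrm{true}}$ by $\mathcal{B}(\ell\mid\hat\ell)$ and $B_{\mathrm{env}}$ by $\mathcal{B}(\hat\ell\mid\hat\ell)$. *)

theory Defs
  imports "HOL-Analysis.Analysis"
begin

definition KL_div ::
  "('q \<Rightarrow> 'q \<Rightarrow> real) \<Rightarrow> 'q \<Rightarrow> ('q \<Rightarrow> 'q \<Rightarrow> real) \<Rightarrow> 'q \<Rightarrow> (nat \<Rightarrow> 'q) \<Rightarrow> nat \<Rightarrow> real" where
  "KL_div a s b x \<xi> n =
     (\<Sum>k=1..n. a s (\<xi> k) * ln (a s (\<xi> k) / b x (\<xi> k))
              + (1 - a s (\<xi> k)) * ln ((1 - a s (\<xi> k)) / (1 - b x (\<xi> k))))"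

definition argmin_set :: "('i \<Rightarrow> real) \<Rightarrow> 'i set \<Rightarrow> 'i set" where
  "argmin_set f I = {i \<in> I. \<forall>j \<in> I. f i \<le> f j}"

end

theory Submission
  imports Defs
begin

lemma KL_split:
  fixes l lh :: "'a \<Rightarrow> 'a \<Rightarrow> real"
  assumes l_range: "\<And>x y. 0 < l x y \<and> l x y < 1"
    and lh_range: "\<And>x y. 0 < lh x y \<and> lh x y < 1"
  shows "KL_div l s lh x \<xi> n = KL_div lh s lh x \<xi> n
     + (\<Sum>k=1..n. l s (\<xi> k) * ln (l s (\<xi> k)) + (1 - l s (\<xi> k)) * ln (1 - l s (\<xi> k))
          - lh s (\<xi> k) * ln (lh s (\<xi> k)) - (1 - lh s (\<xi> k)) * ln (1 - lh s (\<xi> k)))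
     + (\<Sum>k=1..n. (lh s (\<xi> k) - l s (\<xi> k)) * (ln (lh x (\<xi> k)) - ln (1 - lh x (\<xi> k))))"
proof -
  have t: "a * ln (a / b) + (1 - a) * ln ((1 - a) / (1 - b)) =
     (p * ln (p / b) + (1 - p) * ln ((1 - p) / (1 - b)))
     + (a * ln a + (1 - a) * ln (1 - a) - p * ln p - (1 - p) * ln (1 - p))
     + (p - a) * (ln b - ln (1 - b))"
    if "0 < a" "a < 1" "0 < b" "b < 1" "0 < p" "p < 1" for a b p :: real
    using that by (simp add: ln_div algebra_simps)
  show ?thesis
    unfolding KL_div_def sum.distrib[symmetric]
    by (rule sum.cong[OF refl], rule t) (use l_range lh_range in auto)
qed

theorem proposition4:
  fixes l lh :: "real^'q \<Rightarrow> real^'q \<Rightarrow> real"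
    and s :: "real^'q" and c :: "nat \<Rightarrow> real^'q" and M n :: nat
    and \<xi> :: "nat \<Rightarrow> real^'q"
  assumes l_range: "\<And>x y. 0 < l x y \<and> l x y < 1"
    and lh_range: "\<And>x y. 0 < lh x y \<and> lh x y < 1"
    and lh_cont: "continuous_on UNIV (\<lambda>(x, y). lh x y)"
    and env: "\<And>x y. lh x y \<ge> l x y"
    and periodic: "\<And>k. \<xi> (k + n) = \<xi> k"
    and dom: "\<forall>i \<in> {1..M}. \<exists>j \<in> argmin_set (\<lambda>i. KL_div l s lh (c i) \<xi> n) {1..M}.
                 \<forall>k \<in> {1..n}. lh (c j) (\<xi> k) \<ge> lh (c i) (\<xi> k)"
  shows "argmin_set (\<lambda>i. KL_div lh s lh (c i) \<xi> n) {1..M}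
         \<subseteq> argmin_set (\<lambda>i. KL_div l s lh (c i) \<xi> n) {1..M}"
proof
  fix i assume iB: "i \<in> argmin_set (\<lambda>i. KL_div lh s lh (c i) \<xi> n) {1..M}"
  hence iM: "i \<in> {1..M}" and imin: "\<forall>j\<in>{1..M}. KL_div lh s lh (c i) \<xi> n \<le> KL_div lh s lh (c j) \<xi> n"
    by (auto simp: argmin_set_def)
  from dom iM obtain j where jB: "j \<in> argmin_set (\<lambda>i. KL_div l s lh (c i) \<xi> n) {1..M}"
    and jdom: "\<forall>k \<in> {1..n}. lh (c j) (\<xi> k) \<ge> lh (c i) (\<xi> k)" by blast
  from jB have jM: "j \<in> {1..M}" and jmin: "\<forall>m\<in>{1..M}. KL_div l s lh (c j) \<xi> n \<le> KL_div l s lh (c m) \<xi> n"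
    by (auto simp: argmin_set_def)
  define D where "D x = (\<Sum>k=1..n. (lh s (\<xi> k) - l s (\<xi> k)) * (ln (lh x (\<xi> k)) - ln (1 - lh x (\<xi> k))))" for x
  have mono: "D (c i) \<le> D (c j)"
    unfolding D_def
  proof (rule sum_mono)
    fix k assume k: "k \<in> {1..n}"
    let ?bi = "lh (c i) (\<xi> k)" and ?bj = "lh (c j) (\<xi> k)"
    have le: "?bi \<le> ?bj" using jdom k by auto
    have p: "0 < ?bi" "?bi < 1" "0 < ?bj" "?bj < 1" using lh_range by auto
    have "ln ?bi \<le> ln ?bj" using le p by simp
    moreover have "ln (1 - ?bj) \<le> ln (1 - ?bi)" using le p by simp
    ultimately have "ln ?bi - ln (1 - ?bi) \<le> ln ?bj - ln (1 - ?bj)" by linarith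
    moreover have "0 \<le> lh s (\<xi> k) - l s (\<xi> k)" using env[of s "\<xi> k"] by simp
    ultimately show "(lh s (\<xi> k) - l s (\<xi> k)) * (ln ?bi - ln (1 - ?bi))
        \<le> (lh s (\<xi> k) - l s (\<xi> k)) * (ln ?bj - ln (1 - ?bj))"
      by (simp add: mult_left_mono)
  qed
  have spl: "\<And>x. KL_div l s lh x \<xi> n = KL_div lh s lh x \<xi> n
     + (\<Sum>k=1..n. l s (\<xi> k) * ln (l s (\<xi> k)) + (1 - l s (\<xi> k)) * ln (1 - l s (\<xi> k))
          - lh s (\<xi> k) * ln (lh s (\<xi> k)) - (1 - lh s (\<xi> k)) * ln (1 - lh s (\<xi> k))) + D x"
    unfolding D_def by (rule KL_split[OF l_range lh_range])
  have "KL_div l s lh (c i) \<xi> n \<le> KL_div l s lh (c j) \<xi> n"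
    using spl[of "c i"] spl[of "c j"] mono imin jM by force
  hence "\<forall>m\<in>{1..M}. KL_div l s lh (c i) \<xi> n \<le> KL_div l s lh (c m) \<xi> n"
    using jmin by force
  thus "i \<in> argmin_set (\<lambda>i. KL_div l s lh (c i) \<xi> n) {1..M}"
    using iM by (simp add: argmin_set_def)
qed

end
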